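(* Let $T$ be a reduced linear trellis of length $n$. For each span $\mathfrak{s}$ choose a subset $\mathcal{B}_{\mathfrak{s}}\subseteq\mathbb{S}_{\mathfrak{s}}(T)$ whose image in the quotient $\mathbb{S}_{\mathfrak{s}}(T)/\mathbb{S}_{<\mathfrak{s}}(T)$ is a basis of that quotient (with distinct elements mapping to distinct basis elements). Then $\mathcal{B}:=\bigsqcup_{\mathfrak{s}}\mathcal{B}_{\mathfrak{s}}$ (union over all spans) is a basis of $\mathbb{S}(T)$, and for every span $\mathfrak{s}$ the set $\mathcal{B}\cap\mathbb{S}_{\mathfrak{s}}(T)$ spans $\mathbb{S}_{\mathfrak{s}}(T)$. In particular every reduced linear trellis has a product basis.
   Context: Let $\mathbb{F}$ be a finite field with $q$ elements and $n\ge1$; indices are taken in $\mathbb{Z}_n$. A trellis $T$ of length $n$ over $\mathbb{F}$ consists of pairwise disjoint finite vertex sets $V_i(T)$, $i\in\mathbb{Z}_n$, and edge sets $E_i(T)\subseteq V_i(T)\times\mathbb{F}\times V_{i+1}(T)$; $(v,\alpha,w)\in E_i(T)$ is an edge from $v$ to $w$ with label $\alpha$ at time index $i$. Every trellis is assumed trim: each vertex has at least one outgoing and one incoming edge. $T$ is linear if every $V_i(T)$ is an $\mathbb{F}$-vector space and every $E_i(T)$ is a subspace of $V_i(T)\times\mathbb{F}\times V_{i+1}(T)$. A path of length $m$ is a sequence $v_0\alpha_0v_1\alpha_1\cdots\alpha_{m-1}v_m$ such that each $(v_j,\alpha_j,v_{j+1})$ is an edge. A cycle is a path of length $n$ starting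 in $V_0(T)$ with $v_n=v_0$; it is identified with $(\mathbf{v},\boldsymbol{\alpha})\in\prod_{i\in\mathbb{Z}_n}V_i(T)\times\mathbb{F}^n$. The label code $\mathbb{S}(T)$ is the set of cycles (a linear subspace if $T$ is linear). $T$ is reduced if every edge lies on some cycle. Spans. For $a\in\mathbb{Z}_n$ and $0\le l\le n-1$ put $[a,a+l]=\{a,a+1,\dots,a+l\}\subseteq\mathbb{Z}_n$ and $(a,a+l]=[a,a+l]\setminus\{a\}$. Such a pair $(a,l)$ is a span of length $l$; there are also two degenerate spans, $\emptyset$ (length $-1$) and $\mathbb{Z}_n$ (length $n$). Partial order: $(a_1,l_1)\le(a_2,l_2)$ iff ($l_1\le l_2<n-1$ and $[a_1,a_1+l_1]\subseteq[a_2,a_2+l_2]$) or ($l_2=n-1$ and $(a_1,a_1+l_1]\subseteq(a_2,a_2+l_2]$) or $l_1=-1$ or $l_2=n$. A nondegenerate span $(a,l)$ is a span of the cycle $(\mathbf{v},\boldsymbol{\alpha})$ if $\{i:v_i\neq0\}\subseteq(a,a+l]$ and $\{i:\alpha_i\ne0\}\subseteq[a,a+l]$; $\emptyset$ is a span only of the zero cycle and $\mathbb{Z}_n$ is a span of every cycle. The span subcode $\mathbb{S}_{\mathfrak{s}}(T)$ is the subspace of cycles having span $\mathfrak{s}$, and $\mathbb{S}_{<\mathfrak{s}}(T):=\sum_{\mathfrak{s}'\lneq\mathfrak{s}}\mathbb{S}_{\mathfrak{s}'}(T)$. A product basis of $T$ is a basis $\mathcal{B}$ of $\mathbb{S}(T)$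 such that $\mathcal{B}\cap\mathbb{S}_{\mathfrak{s}}(T)$ spans $\mathbb{S}_{\mathfrak{s}}(T)$ for every span $\mathfrak{s}$. *)

theory Defs
  imports Complex_Main "HOL-Library.Function_Algebras" "HOL-Library.Product_Plus"
begin

text \<open>Time indices in Z_n are represented by 0..n-1; the successor of i is (i+1) mod n. Vertices of all time indices live in
  one ambient type 'v (values of V, E outside 0..n-1 are irrelevant).\<close>

definition tsucc :: "nat \<Rightarrow> nat \<Rightarrow> nat" where
  "tsucc n i = Suc i mod n"

definition tpred :: "nat \<Rightarrow> nat \<Rightarrow> nat" where
  "tpred n i = (i + n - 1) mod n"

definition trellis :: "nat \<Rightarrow> (nat \<Rightarrow> 'v set) \<Rightarrow> (nat \<Rightarrow> ('v \<times> 'f \<times> 'v) set) \<Rightarrow> bool" where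
  "trellis n V E \<longleftrightarrow> n \<ge> 1 \<and>
     (\<forall>i<n. finite (V i) \<and> E i \<subseteq> V i \<times> UNIV \<times> V (tsucc n i)) \<and>
     \<comment> \<open>trim: every vertex has an outgoing and an incoming edge\<close>
     (\<forall>i<n. \<forall>v\<in>V i. (\<exists>a w. (v, a, w) \<in> E i) \<and> (\<exists>u a. (u, a, v) \<in> E (tpred n i)))"

definition tscale :: "('f::field \<Rightarrow> 'v \<Rightarrow> 'v) \<Rightarrow> 'f \<Rightarrow> 'v \<times> 'f \<times> 'v \<Rightarrow> 'v \<times> 'f \<times> 'v" where
  "tscale scale c x = (case x of (v, a, w) \<Rightarrow> (scale c v, c * a, scale c w))"

definition linear_trellis ::
  "('f::field \<Rightarrow> 'v::ab_group_add \<Rightarrow> 'v) \<Rightarrow> nat \<Rightarrow> (nat \<Rightarrow> 'v set) \<Rightarrow> (nat \<Rightarrow> ('v \<times> 'f \<times> 'v) set) \<Rightarrow> bool" where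
  "linear_trellis scale n V E \<longleftrightarrow> trellis n V E \<and> vector_space scale \<and>
     (\<forall>i<n. module.subspace scale (V i) \<and> module.subspace (tscale scale) (E i))"

text \<open>Cycles: (v, alpha) with v_i in V_i, alpha_i in F, (v_i, alpha_i, v_(i+1 mod n)) in E_i;
  represented as functions on nat that vanish outside 0..n-1.\<close>
type_synonym ('v, 'f) cyc = "(nat \<Rightarrow> 'v) \<times> (nat \<Rightarrow> 'f)"

definition cycles :: "nat \<Rightarrow> (nat \<Rightarrow> ('v::zero \<times> 'f::zero \<times> 'v) set) \<Rightarrow> ('v, 'f) cyc set" where
  "cycles n E = {(v, a). (\<forall>i<n. (v i, a i, v (tsucc n i)) \<in> E i) \<and> (\<forall>i\<ge>n. v i = 0 \<and> a i = 0)}"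

text \<open>Scalar multiplication on pairs (v, alpha) (componentwise); the label code S(T) = cycles n E
  is a subspace of this vector space.\<close>
definition cscale :: "('f::field \<Rightarrow> 'v \<Rightarrow> 'v) \<Rightarrow> 'f \<Rightarrow> ('v, 'f) cyc \<Rightarrow> ('v, 'f) cyc" where
  "cscale scale c x = (case x of (v, a) \<Rightarrow> (\<lambda>i. scale c (v i), \<lambda>i. c * a i))"

definition reduced :: "nat \<Rightarrow> (nat \<Rightarrow> ('v::zero \<times> 'f::zero \<times> 'v) set) \<Rightarrow> bool" where
  "reduced n E \<longleftrightarrow> (\<forall>i<n. \<forall>v a w. (v, a, w) \<in> E i \<longrightarrow>
      (\<exists>c\<in>cycles n E. fst c i = v \<and> snd c i = a \<and> fst c (tsucc n i) = w))"

text \<open>SSpan a l is the span (a, l); SEmpty is the empty span (length -1), SFull is Z_n (length n).\<close>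
datatype spn = SEmpty | SFull | SSpan nat nat

definition valid_span :: "nat \<Rightarrow> spn \<Rightarrow> bool" where
  "valid_span n s = (case s of SSpan a l \<Rightarrow> a < n \<and> l \<le> n - 1 | _ \<Rightarrow> True)"

text \<open>[a, a+l] and (a, a+l] as subsets of Z_n.\<close>
definition cint :: "nat \<Rightarrow> nat \<Rightarrow> nat \<Rightarrow> nat set" where
  "cint n a l = {(a + j) mod n | j. j \<le> l}"

definition hint :: "nat \<Rightarrow> nat \<Rightarrow> nat \<Rightarrow> nat set" where
  "hint n a l = {(a + j) mod n | j. 1 \<le> j \<and> j \<le> l}"

fun span_le :: "nat \<Rightarrow> spn \<Rightarrow> spn \<Rightarrow> bool" where
  "span_le n SEmpty s2 = True"
| "span_le n s1 SFull = True"
| "span_le n (SSpan a1 l1) (SSpan a2 l2) =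
     ((l1 \<le> l2 \<and> l2 < n - 1 \<and> cint n a1 l1 \<subseteq> cint n a2 l2) \<or>
      (l2 = n - 1 \<and> hint n a1 l1 \<subseteq> hint n a2 l2))"
| "span_le n _ _ = False"

definition has_span :: "nat \<Rightarrow> spn \<Rightarrow> ('v::zero, 'f::zero) cyc \<Rightarrow> bool" where
  "has_span n s c = (case s of
       SEmpty \<Rightarrow> (\<forall>i<n. fst c i = 0 \<and> snd c i = 0)
     | SFull \<Rightarrow> True
     | SSpan a l \<Rightarrow> {i. i < n \<and> fst c i \<noteq> 0} \<subseteq> hint n a l \<and> {i. i < n \<and> snd c i \<noteq> 0} \<subseteq> cint n a l)"

definition span_subcode :: "nat \<Rightarrow> (nat \<Rightarrow> ('v::zero \<times> 'f::zero \<times> 'v) set) \<Rightarrow> spn \<Rightarrow> ('v, 'f) cyc set" where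
  "span_subcode n E s = {c \<in> cycles n E. has_span n s c}"

text \<open>S_{<s}(T): the sum of the subspaces S_s'(T) over spans s' strictly below s
  (a sum of subspaces is the span of their union).\<close>
definition below_subcode ::
  "('f::field \<Rightarrow> 'v::ab_group_add \<Rightarrow> 'v) \<Rightarrow> nat \<Rightarrow> (nat \<Rightarrow> ('v \<times> 'f \<times> 'v) set) \<Rightarrow> spn \<Rightarrow> ('v, 'f) cyc set" where
  "below_subcode scale n E s = module.span (cscale scale)
      (\<Union>{span_subcode n E s' | s'. valid_span n s' \<and> span_le n s' s \<and> s' \<noteq> s})"

text \<open>B \<subseteq> X and the image of B in the quotient X / W is a basis of X / W, with distinct
  elements of B having distinct images (i.e. the family (b + W)_{b \<in> B} is a basis).\<close>
definition quotient_basis :: "('f::field \<Rightarrow> 'b::ab_group_add \<Rightarrow> 'b) \<Rightarrow> 'b set \<Rightarrow> 'b set \<Rightarrow> 'b set \<Rightarrow> bool" where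
  "quotient_basis sc W X B \<longleftrightarrow> B \<subseteq> X \<and>
     (\<forall>t u. finite t \<and> t \<subseteq> B \<and> (\<Sum>b\<in>t. sc (u b) b) \<in> W \<longrightarrow> (\<forall>b\<in>t. u b = 0)) \<and>
     (\<forall>x\<in>X. \<exists>y\<in>module.span sc B. x - y \<in> W)"

definition is_basis :: "('f::field \<Rightarrow> 'b::ab_group_add \<Rightarrow> 'b) \<Rightarrow> 'b set \<Rightarrow> 'b set \<Rightarrow> bool" where
  "is_basis sc B X \<longleftrightarrow> module.independent sc B \<and> module.span sc B = X"

definition product_basis ::
  "('f::field \<Rightarrow> 'v::ab_group_add \<Rightarrow> 'v) \<Rightarrow> nat \<Rightarrow> (nat \<Rightarrow> ('v \<times> 'f \<times> 'v) set) \<Rightarrow> ('v, 'f) cyc set \<Rightarrow> bool" where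
  "product_basis scale n E B \<longleftrightarrow> is_basis (cscale scale) B (cycles n E) \<and>
     (\<forall>s. valid_span n s \<longrightarrow>
        module.span (cscale scale) (B \<inter> span_subcode n E s) = span_subcode n E s)"

end

theory Submission
  imports Defs
begin

definition rel :: "nat \<Rightarrow> nat \<Rightarrow> nat \<Rightarrow> nat" where
  "rel n a i = (i + n - a) mod n"

lemma rel_pos: assumes "a < n" "j < n" shows "rel n a ((a + j) mod n) = j"
proof (cases "a + j < n")
  case True
  then show ?thesis using assms by (simp add: rel_def)
next
  case False
  then have "(a + j) mod n = a + j - n" using assms by (simp add: mod_if)
  then show ?thesis using False assms by (simp add: rel_def)
qed

lemma pos_rel: assumes "a < n" "i < n" shows "(a + rel n a i) mod n = i"
proof (cases "a \<le> i")
  case True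
  then have "(i + n - a) mod n = i - a" using assms by (simp add: mod_if)
  then show ?thesis using True assms by (simp add: rel_def)
next
  case False
  then have "(i + n - a) mod n = i + n - a" using assms by simp
  then show ?thesis using False assms by (simp add: mod_if rel_def)
qed

lemma rel_lt: "n \<ge> 1 \<Longrightarrow> rel n a i < n" unfolding rel_def by simp

lemma rel_inj: "a < n \<Longrightarrow> i < n \<Longrightarrow> i' < n \<Longrightarrow> rel n a i = rel n a i' \<Longrightarrow> i = i'"
  by (metis pos_rel)

lemma rel_self: "a < n \<Longrightarrow> rel n a a = 0" unfolding rel_def by simp

lemma rel_zero_iff: "a < n \<Longrightarrow> i < n \<Longrightarrow> rel n a i = 0 \<longleftrightarrow> i = a"
  by (metis rel_inj rel_self)

lemma mem_cint: "a < n \<Longrightarrow> l < n \<Longrightarrow> i \<in> cint n a l \<longleftrightarrow> i < n \<and> rel n a i \<le> l"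
  unfolding cint_def
  apply (auto simp: rel_pos)
  by (metis pos_rel)

lemma mem_hint: "a < n \<Longrightarrow> l < n \<Longrightarrow> i \<in> hint n a l \<longleftrightarrow> i < n \<and> 1 \<le> rel n a i \<and> rel n a i \<le> l"
  unfolding hint_def
  apply (auto simp: rel_pos)
  by (metis pos_rel)

lemma rel_trans: assumes "a < n" "a' < n" "i < n" shows "rel n a' i = (rel n a' a + rel n a i) mod n"
proof -
  have "(rel n a' a + rel n a i) mod n = ((a + n - a') + (i + n - a)) mod n"
    unfolding rel_def by (simp add: mod_add_eq)
  also have "(a + n - a') + (i + n - a) = (i + n - a') + n" using assms by simp
  also have "(i + n - a' + n) mod n = rel n a' i" by (simp add: rel_def)
  finally show ?thesis by simp
qed

lemma rel_succ: assumes "a < n" "i < n" shows "rel n a (tsucc n i) = (rel n a i + 1) mod n"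
proof -
  have "tsucc n i = (a + (rel n a i + 1)) mod n"
    using pos_rel[OF assms] unfolding tsucc_def by (metis Suc_eq_plus1 add.assoc mod_Suc_eq)
  then show ?thesis using rel_pos[OF assms(1), of "(rel n a i + 1) mod n"] assms
    by (metis mod_add_right_eq mod_less_divisor not_less_zero rel_pos zero_less_iff_neq_zero
        gr_zeroI)
qed


lemma walk:
  fixes D j0 m n L j :: nat
  assumes "D + j0 \<le> m" "m + 1 < n" "\<forall>j. j0 \<le> j \<and> j \<le> L \<longrightarrow> (D + j) mod n \<le> m"
  shows "j0 \<le> j \<Longrightarrow> j \<le> L \<Longrightarrow> D + j \<le> m"
proof (induction j)
  case 0
  then show ?case using assms by simp
next
  case (Suc j)
  show ?case
  proof (cases "j0 = Suc j")
    case True then show ?thesis using assms by simp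
  next
    case False
    then have "D + j \<le> m" using Suc by simp
    then have "D + Suc j < n" using assms by simp
    then show ?thesis using assms(3) Suc.prems by (metis mod_less)
  qed
qed

lemma arc_M1:
  assumes "a1 < n" "a2 < n" "l1 < n" "l2 + 1 < n" "cint n a1 l1 \<subseteq> cint n a2 l2"
  shows "hint n a1 l1 \<subseteq> hint n a2 l2"
proof
  define D where "D = rel n a2 a1"
  have n: "n \<ge> 1" using assms by simp
  have l2: "l2 < n" using assms by simp
  have key: "rel n a2 ((a1 + j) mod n) = (D + j) mod n" if "j < n" for j
    using rel_trans[OF assms(1,2), of "(a1 + j) mod n"] rel_pos[OF assms(1) that] n
    unfolding D_def by simp
  have A: "\<forall>j. 0 \<le> j \<and> j \<le> l1 \<longrightarrow> (D + j) mod n \<le> l2"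
  proof (intro allI impI)
    fix j assume "0 \<le> j \<and> j \<le> l1"
    then have "(a1 + j) mod n \<in> cint n a1 l1" using assms by (simp add: mem_cint rel_pos n)
    then have "(a1 + j) mod n \<in> cint n a2 l2" using assms by blast
    then show "(D + j) mod n \<le> l2" using key[of j] \<open>0 \<le> j \<and> j \<le> l1\<close> assms mem_cint[OF assms(2) l2]
      by simp
  qed
  have D0: "D + 0 \<le> l2" using A[rule_format, of 0] rel_lt[OF n] D_def by simp
  have W: "D + j \<le> l2" if "j \<le> l1" for j using walk[OF D0 assms(4) A] that by simp
  fix i assume "i \<in> hint n a1 l1"
  then have i: "i < n" "1 \<le> rel n a1 i" "rel n a1 i \<le> l1" using mem_hint[OF assms(1,3)] by auto
  have "i = (a1 + rel n a1 i) mod n" using pos_rel[OF assms(1) i(1)] by simp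
  then have "rel n a2 i = (D + rel n a1 i) mod n" using key[of "rel n a1 i"] rel_lt[OF n] by metis
  also have "\<dots> = D + rel n a1 i" using W[OF i(3)] l2 by simp
  finally show "i \<in> hint n a2 l2" using W[OF i(3)] i mem_hint[OF assms(2) l2] by simp
qed

lemma arc_M2:
  assumes "a1 < n" "a2 < n" "l + 1 < n" "cint n a1 l \<subseteq> cint n a2 l"
  shows "a1 = a2"
proof -
  define D where "D = rel n a2 a1"
  have n: "n \<ge> 1" using assms by simp
  have l2: "l < n" using assms by simp
  have key: "rel n a2 ((a1 + j) mod n) = (D + j) mod n" if "j < n" for j
    using rel_trans[OF assms(1,2), of "(a1 + j) mod n"] rel_pos[OF assms(1) that] n
    unfolding D_def by simp
  have A: "\<forall>j. 0 \<le> j \<and> j \<le> l \<longrightarrow> (D + j) mod n \<le> l"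
  proof (intro allI impI)
    fix j assume "0 \<le> j \<and> j \<le> l"
    then have "(a1 + j) mod n \<in> cint n a1 l" using assms by (simp add: mem_cint rel_pos n)
    then have "(a1 + j) mod n \<in> cint n a2 l" using assms by blast
    then show "(D + j) mod n \<le> l" using key[of j] \<open>0 \<le> j \<and> j \<le> l\<close> assms mem_cint[OF assms(2) l2]
      by simp
  qed
  have D0: "D + 0 \<le> l" using A[rule_format, of 0] rel_lt[OF n] D_def by simp
  have "D + l \<le> l" using walk[OF D0 assms(3) A, of l] by simp
  then have "D = 0" by simp
  then show ?thesis using rel_zero_iff[OF assms(2,1)] D_def by simp
qed

lemma arc_A:
  assumes "a < n" "a' < n" "1 \<le> l" "l < n" "l' + 1 < n" "hint n a l \<subseteq> hint n a' l'"
  shows "l \<le> l' \<and> cint n a l \<subseteq> cint n a' l'"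
proof -
  define D where "D = rel n a' a"
  have n: "n \<ge> 1" using assms by simp
  have l2: "l' < n" using assms by simp
  have key: "rel n a' ((a + j) mod n) = (D + j) mod n" if "j < n" for j
    using rel_trans[OF assms(1,2), of "(a + j) mod n"] rel_pos[OF assms(1) that] n
    unfolding D_def by simp
  have A0: "1 \<le> (D + j) mod n \<and> (D + j) mod n \<le> l'" if "1 \<le> j" "j \<le> l" for j
  proof -
    have "(a + j) mod n \<in> hint n a l" using assms that by (simp add: mem_hint rel_pos n)
    then have "(a + j) mod n \<in> hint n a' l'" using assms by blast
    then show ?thesis using key[of j] that assms mem_hint[OF assms(2) l2] by simp
  qed
  have A: "\<forall>j. 1 \<le> j \<and> j \<le> l \<longrightarrow> (D + j) mod n \<le> l'" using A0 by blast
  have Dlt: "D < n" using rel_lt[OF n] D_def by simp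
  have D1: "D + 1 \<le> l'"
  proof (cases "D + 1 < n")
    case True then show ?thesis using A0[of 1] assms by simp
  next
    case False then have "D + 1 = n" using Dlt by simp
    then show ?thesis using A0[of 1] assms by simp
  qed
  have W: "D + j \<le> l'" if "1 \<le> j" "j \<le> l" for j using walk[OF D1 assms(5) A] that by simp
  have "l \<le> l'" using W[of l] assms by simp
  moreover have "cint n a l \<subseteq> cint n a' l'"
  proof
    fix i assume "i \<in> cint n a l"
    then have i: "i < n" "rel n a i \<le> l" using mem_cint[OF assms(1,4)] by auto
    have "i = (a + rel n a i) mod n" using pos_rel[OF assms(1) i(1)] by simp
    then have "rel n a' i = (D + rel n a i) mod n" using key[of "rel n a i"] rel_lt[OF n] by metis
    also have "\<dots> = D + rel n a i"
      using W[of "rel n a i"] i D1 l2 by (cases "rel n a i = 0") auto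
    finally show "i \<in> cint n a' l'" using W[of "rel n a i"] i D1 mem_cint[OF assms(2) l2]
      by (cases "rel n a i = 0") auto
  qed
  ultimately show ?thesis by simp
qed

lemma rel_shift:
  assumes "a < n" "i < n" "k \<le> rel n a i"
  shows "rel n ((a + k) mod n) i = rel n a i - k"
proof -
  have n: "n \<ge> 1" using assms by simp
  have "i = (a + rel n a i) mod n" using pos_rel[OF assms(1,2)] by simp
  also have "\<dots> = ((a + k) mod n + (rel n a i - k)) mod n"
  proof -
    have "a + rel n a i = (a + k) + (rel n a i - k)" using assms(3) by simp
    then show ?thesis by (metis mod_add_left_eq)
  qed
  finally have "rel n ((a + k) mod n) i = rel n ((a + k) mod n) (((a + k) mod n + (rel n a i - k)) mod n)"
    by simp
  also have "\<dots> = rel n a i - k" using rel_pos[of "(a+k) mod n" n "rel n a i - k"] rel_lt[OF n, of a i] n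
    by simp
  finally show ?thesis .
qed


lemma fun_sum_apply: "(sum f A) i = (\<Sum>x\<in>A. f x i)"
  by (induction A rule: infinite_finite_induct) auto

lemma mem_cint_full: "a < n \<Longrightarrow> i < n \<Longrightarrow> i \<in> cint n a (n - 1)"
  using mem_cint[of a n "n - 1" i] rel_lt[of n a i] by simp

lemma has_span_mono:
  assumes "valid_span n s1" "valid_span n s2" "span_le n s1 s2" "has_span n s1 c"
  shows "has_span n s2 c"
proof (cases s1)
  case SEmpty
  then show ?thesis using assms by (cases s2) (auto simp: has_span_def)
next
  case SFull
  then show ?thesis using assms by (cases s2) auto
next
  case (SSpan a1 l1)
  show ?thesis
  proof (cases s2)
    case SEmpty then show ?thesis using assms SSpan by simp
  next
    case SFull then show ?thesis by (simp add: has_span_def)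
  next
    case (SSpan a2 l2)
    have v: "a1 < n" "l1 \<le> n - 1" "a2 < n" "l2 \<le> n - 1"
      using assms \<open>s1 = _\<close> SSpan by (auto simp: valid_span_def)
    have n: "n \<ge> 1" using v by simp
    from assms(3) \<open>s1 = _\<close> SSpan
    have "(l1 \<le> l2 \<and> l2 < n - 1 \<and> cint n a1 l1 \<subseteq> cint n a2 l2) \<or>
      (l2 = n - 1 \<and> hint n a1 l1 \<subseteq> hint n a2 l2)" by simp
    then show ?thesis
    proof
      assume h: "l1 \<le> l2 \<and> l2 < n - 1 \<and> cint n a1 l1 \<subseteq> cint n a2 l2"
      have "l1 < n" "l2 + 1 < n" using v h by auto
      then have "hint n a1 l1 \<subseteq> hint n a2 l2" using arc_M1[of a1 n a2 l1 l2] v h by auto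
      then show ?thesis using assms(4) h \<open>s1 = _\<close> SSpan by (auto simp: has_span_def)
    next
      assume h: "l2 = n - 1 \<and> hint n a1 l1 \<subseteq> hint n a2 l2"
      then show ?thesis using assms(4) \<open>s1 = _\<close> SSpan mem_cint_full[of a2 n] v
        by (auto simp: has_span_def)
    qed
  qed
qed

fun mu :: "nat \<Rightarrow> spn \<Rightarrow> nat" where
  "mu n SEmpty = 0" | "mu n (SSpan a l) = l + 1" | "mu n SFull = n + 1"

lemma mu_less:
  assumes "valid_span n s1" "valid_span n s2" "span_le n s1 s2" "s1 \<noteq> s2"
  shows "mu n s1 < mu n s2"
proof (cases s1)
  case SEmpty
  then show ?thesis using assms by (cases s2) auto
next
  case SFull
  then show ?thesis using assms by (cases s2) auto
next
  case (SSpan a1 l1)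
  show ?thesis
  proof (cases s2)
    case SEmpty then show ?thesis using assms SSpan by simp
  next
    case SFull then show ?thesis using assms SSpan by (simp add: valid_span_def; linarith)
  next
    case (SSpan a2 l2)
    have v: "a1 < n" "l1 \<le> n - 1" "a2 < n" "l2 \<le> n - 1"
      using assms \<open>s1 = _\<close> SSpan by (auto simp: valid_span_def)
    have n: "n \<ge> 1" using v by simp
    from assms(3) \<open>s1 = _\<close> SSpan
    have "(l1 \<le> l2 \<and> l2 < n - 1 \<and> cint n a1 l1 \<subseteq> cint n a2 l2) \<or>
      (l2 = n - 1 \<and> hint n a1 l1 \<subseteq> hint n a2 l2)" by simp
    then show ?thesis
    proof
      assume h: "l1 \<le> l2 \<and> l2 < n - 1 \<and> cint n a1 l1 \<subseteq> cint n a2 l2"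
      show ?thesis
      proof (rule ccontr)
        assume "\<not> ?thesis"
        then have "l1 = l2" using h \<open>s1 = _\<close> SSpan by simp
        then have "a1 = a2" using arc_M2[of a1 n a2 l1] h v by auto
        then show False using \<open>l1 = l2\<close> assms(4) \<open>s1 = _\<close> SSpan by simp
      qed
    next
      assume h: "l2 = n - 1 \<and> hint n a1 l1 \<subseteq> hint n a2 l2"
      show ?thesis
      proof (rule ccontr)
        assume "\<not> ?thesis"
        then have "l1 = n - 1" using h v \<open>s1 = _\<close> SSpan by simp
        have "a2 \<notin> hint n a1 l1"
          using h mem_hint[OF v(3), of l2 a2] rel_self[OF v(3)] n by auto
        then have "rel n a1 a2 = 0" using mem_hint[OF v(1), of l1 a2] v \<open>l1 = n - 1\<close> rel_lt[OF n, of a1 a2]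
          by auto
        then have "a1 = a2" using rel_zero_iff[OF v(1,3)] by simp
        then show False using \<open>l1 = n - 1\<close> h assms(4) \<open>s1 = _\<close> SSpan by simp
      qed
    qed
  qed
qed


locale LT = V: vector_space scale
  for scale :: "'f::field \<Rightarrow> 'v::ab_group_add \<Rightarrow> 'v" +
  fixes n :: nat and E :: "nat \<Rightarrow> ('v \<times> 'f \<times> 'v) set"
  assumes n1: "1 \<le> n" and Esub: "\<And>i. i < n \<Longrightarrow> module.subspace (tscale scale) (E i)"
begin

lemma tscale_eq: "tscale scale c x = (scale c (fst x), c * fst (snd x), scale c (snd (snd x)))"
  by (cases x) (simp add: tscale_def)

lemma tmod: "module (tscale scale)"
  by unfold_locales
    (auto simp: tscale_eq V.scale_right_distrib V.scale_left_distrib algebra_simps)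

lemmas Esub' = Esub[unfolded module.subspace_def[OF tmod]]

lemma E_zero: "i < n \<Longrightarrow> (0, 0, 0) \<in> E i"
  using Esub'[of i] by (simp add: zero_prod_def)

lemma E_add: "i < n \<Longrightarrow> x \<in> E i \<Longrightarrow> y \<in> E i \<Longrightarrow> x + y \<in> E i"
  using Esub'[of i] by simp

lemma E_scale: "i < n \<Longrightarrow> (v, a, w) \<in> E i \<Longrightarrow> (scale c v, c * a, scale c w) \<in> E i"
  using Esub'[of i] unfolding tscale_def by force

lemma E_sum: "i < n \<Longrightarrow> (\<And>x. x \<in> A \<Longrightarrow> f x \<in> E i) \<Longrightarrow> sum f A \<in> E i"
proof (induction A rule: infinite_finite_induct)
  case (infinite A) then show ?case using E_zero by (simp add: zero_prod_def)
next
  case empty then show ?case using E_zero by (simp add: zero_prod_def)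
next
  case (insert x F) then show ?case using E_add by simp
qed

lemma cscale_fst[simp]: "fst (cscale scale c x) i = scale c (fst x i)"
  by (cases x) (simp add: cscale_def)
lemma cscale_snd[simp]: "snd (cscale scale c x) i = c * snd x i"
  by (cases x) (simp add: cscale_def)

lemma cscale_eq: "cscale scale c x = (\<lambda>i. scale c (fst x i), \<lambda>i. c * snd x i)"
  by (cases x) (simp add: cscale_def)

lemma cmod: "module (cscale scale)"
  by unfold_locales
    (auto simp: cscale_eq fun_eq_iff V.scale_right_distrib V.scale_left_distrib
      algebra_simps)

sublocale C: module "cscale scale" by (rule cmod)

lemma fst_csum: "fst (sum f A) i = (\<Sum>x\<in>A. fst (f x) i)"
  by (simp add: fst_sum fun_sum_apply)
lemma snd_csum: "snd (sum f A) i = (\<Sum>x\<in>A. snd (f x) i)"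
  by (simp add: snd_sum fun_sum_apply)

lemma cycle_edge: "c \<in> cycles n E \<Longrightarrow> i < n \<Longrightarrow> (fst c i, snd c i, fst c (tsucc n i)) \<in> E i"
  by (cases c) (auto simp: cycles_def)
lemma cycle_out: "c \<in> cycles n E \<Longrightarrow> n \<le> i \<Longrightarrow> fst c i = 0 \<and> snd c i = 0"
  by (cases c) (auto simp: cycles_def)
lemma cyclesI: "(\<And>i. i < n \<Longrightarrow> (fst c i, snd c i, fst c (tsucc n i)) \<in> E i) \<Longrightarrow>
   (\<And>i. n \<le> i \<Longrightarrow> fst c i = 0 \<and> snd c i = 0) \<Longrightarrow> c \<in> cycles n E"
  by (cases c) (auto simp: cycles_def)

lemma cycles_sub: "C.subspace (cycles n E)"
proof (rule C.subspaceI)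
  show "0 \<in> cycles n E" by (rule cyclesI) (auto simp: E_zero)
next
  fix x y assume "x \<in> cycles n E" "y \<in> cycles n E"
  then show "x + y \<in> cycles n E"
    using E_add[of _ "(fst x _, snd x _, fst x (tsucc n _))" "(fst y _, snd y _, fst y (tsucc n _))"]
    by (intro cyclesI) (auto simp: cycle_edge cycle_out)
next
  fix c x assume "x \<in> cycles n E"
  then show "cscale scale c x \<in> cycles n E"
    by (intro cyclesI) (auto simp: cycle_edge cycle_out E_scale)
qed

lemma S_sub: "C.subspace (span_subcode n E s)"
proof (rule C.subspaceI)
  show "0 \<in> span_subcode n E s" using cycles_sub
    by (cases s) (auto simp: span_subcode_def has_span_def C.subspace_0)
next
  fix x y assume "x \<in> span_subcode n E s" "y \<in> span_subcode n E s"
  then show "x + y \<in> span_subcode n E s" using C.subspace_add[OF cycles_sub]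
    by (cases s) (auto simp: span_subcode_def has_span_def subset_iff)
next
  fix c x assume "x \<in> span_subcode n E s"
  then show "cscale scale c x \<in> span_subcode n E s" using C.subspace_scale[OF cycles_sub]
    by (cases s) (auto simp: span_subcode_def has_span_def subset_iff)
qed


lemma hint0: "hint n a 0 = {}" by (simp add: hint_def)
lemma cint0: "cint n a 0 = {a mod n}" by (auto simp: cint_def)

lemma vanish:
  assumes a: "a < n" and l: "1 \<le> l" "l \<le> n - 1" and v: "valid_span n s'"
    and nle: "\<not> span_le n (SSpan a l) s'" and c: "c \<in> span_subcode n E s'"
  shows "\<exists>k. 1 \<le> k \<and> k \<le> l \<and> fst c ((a + k) mod n) = 0"
proof (cases s')
  case SEmpty
  then have "fst c ((a + 1) mod n) = 0" using c n1 by (simp add: span_subcode_def has_span_def)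
  then show ?thesis using l by blast
next
  case SFull then show ?thesis using nle by simp
next
  case (SSpan a' l')
  have v': "a' < n" "l' \<le> n - 1" using v SSpan by (auto simp: valid_span_def)
  have ln: "l < n" "l' < n" using l v' n1 by auto
  show ?thesis
  proof (rule ccontr)
    assume "\<not> ?thesis"
    then have nz: "fst c ((a + k) mod n) \<noteq> 0" if "1 \<le> k" "k \<le> l" for k using that by blast
    have hs: "{i. i < n \<and> fst c i \<noteq> 0} \<subseteq> hint n a' l'"
      using c SSpan by (simp add: span_subcode_def has_span_def)
    have "hint n a l \<subseteq> hint n a' l'"
    proof
      fix i assume "i \<in> hint n a l"
      then have i: "i < n" "1 \<le> rel n a i" "rel n a i \<le> l" using mem_hint[OF a ln(1)] by auto
      have "fst c i \<noteq> 0" using nz[OF i(2,3)] pos_rel[OF a i(1)] by simp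
      then show "i \<in> hint n a' l'" using hs i by blast
    qed
    moreover have nle2: "\<not> span_le n (SSpan a l) (SSpan a' l')" using nle SSpan by simp
    ultimately show False
    proof (cases "l' = n - 1")
      case True
      then show False using \<open>hint n a l \<subseteq> hint n a' l'\<close> nle2 by simp
    next
      case False
      then have "l' + 1 < n" using v' by simp
      then have "l \<le> l' \<and> cint n a l \<subseteq> cint n a' l'"
        using arc_A[OF a v'(1) l(1) ln(1)] \<open>hint n a l \<subseteq> hint n a' l'\<close> by simp
      then show False using nle2 False v' by simp
    qed
  qed
qed

lemma vanish0:
  assumes a: "a < n" and v: "valid_span n s'"
    and nle: "\<not> span_le n (SSpan a 0) s'" and c: "c \<in> span_subcode n E s'"
  shows "snd c a = 0"
proof (cases s')
  case SEmpty
  then show ?thesis using c a by (simp add: span_subcode_def has_span_def)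
next
  case SFull then show ?thesis using nle by simp
next
  case (SSpan a' l')
  have v': "a' < n" "l' \<le> n - 1" using v SSpan by (auto simp: valid_span_def)
  have "l' \<noteq> n - 1" using nle SSpan by (auto simp: hint0)
  then have "a \<notin> cint n a' l'" using nle SSpan v' a by (auto simp: cint0)
  then show ?thesis using c SSpan a by (auto simp: span_subcode_def has_span_def)
qed


lemma cut:
  assumes a: "a < n" and l: "1 \<le> l" "l < n" and t: "finite t" "t \<noteq> {}"
    and x: "x = (\<Sum>c\<in>t. z c)" and zc: "\<And>c. c \<in> t \<Longrightarrow> z c \<in> cycles n E"
    and k: "\<And>c. c \<in> t \<Longrightarrow> 1 \<le> k c \<and> k c \<le> l \<and> fst (z c) ((a + k c) mod n) = 0"
    and xs: "x \<in> span_subcode n E (SSpan a l)"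
  shows "x \<in> below_subcode scale n E (SSpan a l)"
proof -
  define r where "r = rel n a"
  have rlt: "r i < n" for i using rel_lt[OF n1] r_def by simp
  have Z: "fst (z c) i = 0" if "c \<in> t" "i < n" "r i = k c" for c i
    using k[OF that(1)] pos_rel[OF a that(2)] that r_def by metis
  define R where "R = (\<lambda>i. if i < n \<and> r i \<le> l then \<Sum>c\<in>{c\<in>t. k c < r i}. fst (z c) i else 0,
                        \<lambda>i. if i < n \<and> r i \<le> l then \<Sum>c\<in>{c\<in>t. k c \<le> r i}. snd (z c) i else 0)"
  have fR: "fst R i = (if i < n \<and> r i \<le> l then \<Sum>c\<in>{c\<in>t. k c < r i}. fst (z c) i else 0)" for i
    by (simp add: R_def)
  have sR: "snd R i = (if i < n \<and> r i \<le> l then \<Sum>c\<in>{c\<in>t. k c \<le> r i}. snd (z c) i else 0)" for i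
    by (simp add: R_def)
  have fx: "fst x i = (\<Sum>c\<in>t. fst (z c) i)" for i using x by (simp add: fst_csum)
  have sx: "snd x i = (\<Sum>c\<in>t. snd (z c) i)" for i using x by (simp add: snd_csum)
  have xcyc: "x \<in> cycles n E" using xs by (simp add: span_subcode_def)
  have xv: "fst x i = 0" if "i < n" "\<not> (1 \<le> r i \<and> r i \<le> l)" for i
    using xs that mem_hint[OF a l(2)] r_def by (auto simp: span_subcode_def has_span_def)
  have xl: "snd x i = 0" if "i < n" "\<not> r i \<le> l" for i
    using xs that mem_cint[OF a l(2)] r_def by (auto simp: span_subcode_def has_span_def)
  have sumeq1: "(\<Sum>c\<in>{c\<in>t. k c < r i}. fst (z c) i) = (\<Sum>c\<in>{c\<in>t. k c \<le> r i}. fst (z c) i)"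
    if "i < n" for i
  proof (rule sum.mono_neutral_left)
    show "finite {c \<in> t. k c \<le> r i}" using t by simp
    show "{c \<in> t. k c < r i} \<subseteq> {c \<in> t. k c \<le> r i}" by auto
    show "\<forall>c\<in>{c \<in> t. k c \<le> r i} - {c \<in> t. k c < r i}. fst (z c) i = 0"
      using Z that by force
  qed
  have all: "{c\<in>t. k c \<le> m} = t" if "l \<le> m" for m using k that by force
  have fR0: "fst R i = 0" if "r i = 0 \<or> l < r i" for i
    using that by (auto simp: fR)
  have Rcyc: "R \<in> cycles n E"
  proof (rule cyclesI)
    fix i assume "n \<le> i" then show "fst R i = 0 \<and> snd R i = 0" by (simp add: fR sR)
  next
    fix i assume i: "i < n"
    have ts: "tsucc n i < n" using n1 by (simp add: tsucc_def)
    have rs: "r (tsucc n i) = (r i + 1) mod n" using rel_succ[OF a i] r_def by simp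
    consider "r i < l" | "r i = l" | "l < r i" by linarith
    then show "(fst R i, snd R i, fst R (tsucc n i)) \<in> E i"
    proof cases
      case 1
      then have rs': "r (tsucc n i) = r i + 1" using rs l by simp
      have e1: "fst R i = (\<Sum>c\<in>{c\<in>t. k c \<le> r i}. fst (z c) i)" using 1 i sumeq1 by (simp add: fR)
      have e2: "snd R i = (\<Sum>c\<in>{c\<in>t. k c \<le> r i}. snd (z c) i)" using 1 i by (simp add: sR)
      have e3: "fst R (tsucc n i) = (\<Sum>c\<in>{c\<in>t. k c \<le> r i}. fst (z c) (tsucc n i))"
        using 1 ts rs' by (simp add: fR less_Suc_eq_le)
      have "(fst R i, snd R i, fst R (tsucc n i)) =
          (\<Sum>c\<in>{c\<in>t. k c \<le> r i}. (fst (z c) i, snd (z c) i, fst (z c) (tsucc n i)))"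
        unfolding e1 e2 e3 by (simp add: prod_eq_iff fst_sum snd_sum)
      also have "\<dots> \<in> E i" by (rule E_sum[OF i]) (use cycle_edge[OF zc i] in auto)
      finally show ?thesis .
    next
      case 2
      have h0: "fst R (tsucc n i) = 0"
      proof (cases "l + 1 < n")
        case True then show ?thesis using rs 2 by (intro fR0) simp
      next
        case False then have "l + 1 = n" using l by simp
        then show ?thesis using rs 2 by (intro fR0) simp
      qed
      have x0: "fst x (tsucc n i) = 0"
      proof (cases "l + 1 < n")
        case True then show ?thesis using rs 2 ts by (intro xv) auto
      next
        case False then have "l + 1 = n" using l by simp
        then show ?thesis using rs 2 ts by (intro xv) auto
      qed
      have "fst R i = fst x i" using 2 i sumeq1[OF i] all[of "r i"] by (simp add: fR fx)
      moreover have "snd R i = snd x i" using 2 i all[of "r i"] by (simp add: sR sx)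
      ultimately have "(fst R i, snd R i, fst R (tsucc n i)) = (fst x i, snd x i, fst x (tsucc n i))"
        using h0 x0 by simp
      then show ?thesis using cycle_edge[OF xcyc i] by simp
    next
      case 3
      have h0: "fst R (tsucc n i) = 0"
      proof (cases "r i + 1 < n")
        case True then show ?thesis using rs 3 by (intro fR0) simp
      next
        case False then have "r i + 1 = n" using rlt[of i] by simp
        then show ?thesis using rs 3 by (intro fR0) simp
      qed
      then show ?thesis using 3 E_zero[OF i] by (simp add: fR sR)
    qed
  qed
  define K where "K = Max (k ` t)"
  define \<kappa> where "\<kappa> = Min (k ` t)"
  have Kge: "k c \<le> K" if "c \<in> t" for c using t that K_def by simp
  have kge: "\<kappa> \<le> k c" if "c \<in> t" for c using t that \<kappa>_def by simp
  obtain c0 where c0: "c0 \<in> t" "K = k c0" using t K_def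
    by (metis (mono_tags, lifting) Max_in finite_imageI image_iff image_is_empty)
  obtain c1 where c1: "c1 \<in> t" "\<kappa> = k c1" using t \<kappa>_def
    by (metis (mono_tags, lifting) Min_in finite_imageI image_iff image_is_empty)
  have K: "1 \<le> K" "K \<le> l" using k[OF c0(1)] c0 by auto
  have kap: "1 \<le> \<kappa>" "\<kappa> \<le> l" using k[OF c1(1)] c1 by auto
  have xRcyc: "x - R \<in> cycles n E" using C.subspace_diff[OF cycles_sub xcyc Rcyc] .
  have xR1: "x - R \<in> span_subcode n E (SSpan a (K - 1))"
  proof -
    have "fst x i = fst R i" if i1: "i < n" and i2: "\<not> (1 \<le> r i \<and> r i \<le> K - 1)" for i
    proof -
      consider "r i = 0" | "l < r i" | "K \<le> r i" "r i \<le> l" using i2 K by linarith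
      then show ?thesis
      proof cases
        case 1 then show ?thesis using xv[OF i1] fR0 by simp
      next
        case 2 then show ?thesis using xv[OF i1] fR0 by simp
      next
        case 3
        have "{c\<in>t. k c \<le> r i} = t" using Kge 3 by force
        then show ?thesis using 3 i1 sumeq1[OF i1] by (simp add: fR fx)
      qed
    qed
    moreover have "snd x i = snd R i" if "i < n" "\<not> r i \<le> K - 1" for i
    proof (cases "l < r i")
      case True then show ?thesis using xl[OF that(1)] by (simp add: sR)
    next
      case False
      have "{c\<in>t. k c \<le> r i} = t" using Kge that K by force
      then show ?thesis using False that by (simp add: sR sx)
    qed
    moreover have "K - 1 < n" using K l by simp
    ultimately show ?thesis using xRcyc mem_hint[OF a, of "K - 1"] mem_cint[OF a, of "K - 1"] r_def
      by (auto simp: span_subcode_def has_span_def)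
  qed
  define a2 where "a2 = (a + \<kappa>) mod n"
  have a2: "a2 < n" using n1 a2_def by simp
  have R2: "R \<in> span_subcode n E (SSpan a2 (l - \<kappa>))"
  proof -
    have "i \<in> hint n a2 (l - \<kappa>)" if "i < n" "fst R i \<noteq> 0" for i
    proof -
      have ri: "r i \<le> l" using that by (auto simp: fR split: if_splits)
      have "fst R i = (\<Sum>c\<in>{c\<in>t. k c < r i}. fst (z c) i)" using that(1) ri by (simp add: fR)
      then have "{c\<in>t. k c < r i} \<noteq> {}" using that(2) by force
      then have "\<kappa> < r i" using kge by force
      then have "rel n a2 i = r i - \<kappa>" using rel_shift[OF a that(1), of \<kappa>] a2_def r_def by simp
      then show ?thesis using mem_hint[OF a2, of "l - \<kappa>" i] that ri \<open>\<kappa> < r i\<close> l by (simp; linarith)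
    qed
    moreover have "i \<in> cint n a2 (l - \<kappa>)" if "i < n" "snd R i \<noteq> 0" for i
    proof -
      have ri: "r i \<le> l" using that by (auto simp: sR split: if_splits)
      have "snd R i = (\<Sum>c\<in>{c\<in>t. k c \<le> r i}. snd (z c) i)" using that(1) ri by (simp add: sR)
      then have "{c\<in>t. k c \<le> r i} \<noteq> {}" using that(2) by force
      then have "\<kappa> \<le> r i" using kge by force
      then have "rel n a2 i = r i - \<kappa>" using rel_shift[OF a that(1), of \<kappa>] a2_def r_def by simp
      then show ?thesis using mem_cint[OF a2, of "l - \<kappa>" i] that ri \<open>\<kappa> \<le> r i\<close> l by (simp; linarith)
    qed
    ultimately show ?thesis using Rcyc by (auto simp: span_subcode_def has_span_def)
  qed
  have le1: "span_le n (SSpan a (K - 1)) (SSpan a l)"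
  proof (cases "l = n - 1")
    case True
    then show ?thesis using mem_hint[OF a, of "K - 1"] mem_hint[OF a, of l] K l by auto
  next
    case False
    then show ?thesis using mem_cint[OF a, of "K - 1"] mem_cint[OF a, of l] K l by auto
  qed
  have le2: "span_le n (SSpan a2 (l - \<kappa>)) (SSpan a l)"
  proof -
    have h: "hint n a2 (l - \<kappa>) \<subseteq> hint n a l"
    proof
      fix i assume "i \<in> hint n a2 (l - \<kappa>)"
      then obtain j where j: "i = (a2 + j) mod n" "1 \<le> j" "j \<le> l - \<kappa>" by (auto simp: hint_def)
      have "i = (a + (\<kappa> + j)) mod n" using j(1) a2_def by (simp add: mod_add_left_eq add.assoc)
      then show "i \<in> hint n a l" using j kap unfolding hint_def by (intro CollectI exI[of _ "\<kappa> + j"]) auto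
    qed
    have c: "cint n a2 (l - \<kappa>) \<subseteq> cint n a l"
    proof
      fix i assume "i \<in> cint n a2 (l - \<kappa>)"
      then obtain j where j: "i = (a2 + j) mod n" "j \<le> l - \<kappa>" by (auto simp: cint_def)
      have "i = (a + (\<kappa> + j)) mod n" using j(1) a2_def by (simp add: mod_add_left_eq add.assoc)
      then show "i \<in> cint n a l" using j kap unfolding cint_def by (intro CollectI exI[of _ "\<kappa> + j"]) auto
    qed
    show ?thesis using h c l by auto
  qed
  have v1: "valid_span n (SSpan a (K - 1))" using a K l by (simp add: valid_span_def)
  have v2: "valid_span n (SSpan a2 (l - \<kappa>))" using a2 l by (simp add: valid_span_def)
  have ne1: "SSpan a (K - 1) \<noteq> SSpan a l" using K by simp
  have ne2: "SSpan a2 (l - \<kappa>) \<noteq> SSpan a l" using kap by (simp; linarith)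
  let ?U = "\<Union>{span_subcode n E s' | s'. valid_span n s' \<and> span_le n s' (SSpan a l) \<and> s' \<noteq> SSpan a l}"
  have "x - R \<in> ?U" using xR1 v1 le1 ne1 by blast
  moreover have "R \<in> ?U" using R2 v2 le2 ne2 by blast
  ultimately have "(x - R) + R \<in> C.span ?U" by (intro C.span_add C.span_base)
  then show ?thesis by (simp add: below_subcode_def)
qed


lemma zero_cyc: "c \<in> cycles n E \<Longrightarrow> (\<And>i. i < n \<Longrightarrow> fst c i = 0 \<and> snd c i = 0) \<Longrightarrow> c = 0"
  using cycle_out[of c] by (auto simp: prod_eq_iff fun_eq_iff) (meson not_less)+

lemma S_mono: "valid_span n s1 \<Longrightarrow> valid_span n s2 \<Longrightarrow> span_le n s1 s2 \<Longrightarrow>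
    span_subcode n E s1 \<subseteq> span_subcode n E s2"
  using has_span_mono by (auto simp: span_subcode_def)

lemma KL:
  assumes v: "valid_span n s" and xs: "x \<in> span_subcode n E s"
    and xu: "x \<in> C.span (\<Union>{span_subcode n E s' | s'. valid_span n s' \<and> \<not> span_le n s s'})"
  shows "x \<in> below_subcode scale n E s"
proof (cases s)
  case SEmpty
  then have "x = 0" using xs by (intro zero_cyc) (auto simp: span_subcode_def has_span_def)
  then show ?thesis by (simp add: below_subcode_def C.span_zero)
next
  case SFull
  have "(\<Union>{span_subcode n E s' | s'. valid_span n s' \<and> \<not> span_le n s s'}) \<subseteq>
     (\<Union>{span_subcode n E s' | s'. valid_span n s' \<and> span_le n s' s \<and> s' \<noteq> s})"
  proof -
    have "span_le n s' SFull" for s' by (cases s') auto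
    then show ?thesis using SFull by auto
  qed
  then show ?thesis using xu C.span_mono unfolding below_subcode_def by blast
next
  case (SSpan a l)
  have a: "a < n" and l: "l \<le> n - 1" using v SSpan by (auto simp: valid_span_def)
  let ?G = "\<Union>{span_subcode n E s' | s'. valid_span n s' \<and> \<not> span_le n s s'}"
  obtain t u where t: "finite t" "t \<subseteq> ?G" and x: "x = (\<Sum>c\<in>t. cscale scale (u c) c)"
    using xu unfolding C.span_explicit by blast
  have tG: "\<exists>s'. valid_span n s' \<and> \<not> span_le n (SSpan a l) s' \<and> c \<in> span_subcode n E s'"
    if "c \<in> t" for c using t that SSpan by blast
  have tcyc: "c \<in> cycles n E" if "c \<in> t" for c using tG[OF that] by (auto simp: span_subcode_def)
  show ?thesis
  proof (cases "l = 0")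
    case True
    have "x = 0"
    proof (rule zero_cyc)
      show "x \<in> cycles n E" using xs by (simp add: span_subcode_def)
      fix i assume i: "i < n"
      have f: "fst x i = 0" using xs SSpan True i by (auto simp: span_subcode_def has_span_def hint0)
      have "snd x i = 0"
      proof (cases "i = a")
        case True
        have "snd x i = (\<Sum>c\<in>t. u c * snd c a)" using x True by (simp add: snd_csum)
        also have "\<dots> = 0" using tG vanish0[OF a] \<open>l = 0\<close> by (intro sum.neutral) force
        finally show ?thesis .
      next
        case False
        then show ?thesis using xs SSpan \<open>l = 0\<close> i a by (auto simp: span_subcode_def has_span_def cint0)
      qed
      then show "fst x i = 0 \<and> snd x i = 0" using f by simp
    qed
    then show ?thesis by (simp add: below_subcode_def C.span_zero)
  next
    case False
    show ?thesis
    proof (cases "t = {}")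
      case True
      then have "x = 0" using x by simp
      then show ?thesis by (simp add: below_subcode_def C.span_zero)
    next
      case tne: False
      define k :: "('v, 'f) cyc \<Rightarrow> nat" where "k c = (SOME k. 1 \<le> k \<and> k \<le> l \<and> fst c ((a + k) mod n) = 0)" for c
      have k: "1 \<le> k c \<and> k c \<le> l \<and> fst c ((a + k c) mod n) = 0" if ct: "c \<in> t" for c
      proof -
        obtain s' where "valid_span n s'" "\<not> span_le n (SSpan a l) s'" "c \<in> span_subcode n E s'"
          using tG[OF ct] by blast
        then have "\<exists>k. 1 \<le> k \<and> k \<le> l \<and> fst c ((a + k) mod n) = 0"
          using vanish[OF a _ l] False by simp
        then show ?thesis unfolding k_def by (rule someI_ex)
      qed
      have ln: "l < n" using l n1 by simp
      show ?thesis unfolding SSpan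
      proof (rule cut[OF a _ ln t(1) tne x, of k])
        show "1 \<le> l" using False by simp
        show "cscale scale (u c) c \<in> cycles n E" if "c \<in> t" for c
          using C.subspace_scale[OF cycles_sub tcyc[OF that]] .
        show "1 \<le> k c \<and> k c \<le> l \<and> fst (cscale scale (u c) c) ((a + k c) mod n) = 0" if "c \<in> t" for c
          using k[OF that] by simp
        show "x \<in> span_subcode n E (SSpan a l)" using xs SSpan by simp
      qed
    qed
  qed
qed


lemma notin_below:
  assumes "quotient_basis (cscale scale) W X B'" "b \<in> B'"
  shows "b \<notin> W"
proof
  assume bW: "b \<in> W"
  from assms(1) have H: "\<And>t u. finite t \<Longrightarrow> t \<subseteq> B' \<Longrightarrow> (\<Sum>b\<in>t. cscale scale (u b) b) \<in> W \<Longrightarrow> \<forall>b\<in>t. u b = 0"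
    unfolding quotient_basis_def by blast
  have "\<forall>b'\<in>{b}. (\<lambda>_. (1::'f)) b' = 0" using bW assms(2) by (intro H) auto
  then show False by simp
qed

context
  fixes Bs :: "spn \<Rightarrow> ('v, 'f) cyc set"
  assumes choice: "\<forall>s. valid_span n s \<longrightarrow>
       quotient_basis (cscale scale) (below_subcode scale n E s) (span_subcode n E s) (Bs s)"
begin

lemma qb: "valid_span n s \<Longrightarrow> quotient_basis (cscale scale) (below_subcode scale n E s) (span_subcode n E s) (Bs s)"
  using choice by blast

lemma Bs_S: "valid_span n s \<Longrightarrow> Bs s \<subseteq> span_subcode n E s"
  using qb by (simp add: quotient_basis_def)

lemma disj: "valid_span n s \<Longrightarrow> valid_span n s' \<Longrightarrow> s \<noteq> s' \<Longrightarrow> Bs s \<inter> Bs s' = {}"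
proof (rule ccontr)
  assume v: "valid_span n s" "valid_span n s'" "s \<noteq> s'" and "Bs s \<inter> Bs s' \<noteq> {}"
  then obtain b where b: "b \<in> Bs s" "b \<in> Bs s'" by blast
  have bs: "b \<in> span_subcode n E s" "b \<in> span_subcode n E s'" using b Bs_S v by auto
  show False
  proof (cases "span_le n s s'")
    case True
    then have "b \<in> below_subcode scale n E s'" unfolding below_subcode_def
      using bs v by (intro C.span_base) blast
    then show False using notin_below[OF qb[OF v(2)] b(2)] by simp
  next
    case False
    then have "b \<in> C.span (\<Union>{span_subcode n E s'' | s''. valid_span n s'' \<and> \<not> span_le n s s''})"
      using bs v by (intro C.span_base) blast
    then have "b \<in> below_subcode scale n E s" using KL[OF v(1) bs(1)] by simp
    then show False using notin_below[OF qb[OF v(1)] b(1)] by simp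
  qed
qed

definition BB where "BB = \<Union>{Bs s | s. valid_span n s}"

lemma BB_eq: "BB = \<Union>{Bs s | s. valid_span n s}" by (rule BB_def)

lemma span_S: "valid_span n s \<Longrightarrow> span_subcode n E s \<subseteq> C.span (BB \<inter> span_subcode n E s)"
proof (induction "mu n s" arbitrary: s rule: less_induct)
  case less
  show ?case
  proof
    fix x assume x: "x \<in> span_subcode n E s"
    obtain y where y: "y \<in> C.span (Bs s)" "x - y \<in> below_subcode scale n E s"
      using qb[OF less.prems] x unfolding quotient_basis_def by blast
    have sub: "Bs s \<subseteq> BB \<inter> span_subcode n E s" using Bs_S[OF less.prems] less.prems BB_def by blast
    have U: "span_subcode n E s' \<subseteq> C.span (BB \<inter> span_subcode n E s)"
      if s': "valid_span n s'" "span_le n s' s" "s' \<noteq> s" for s'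
    proof -
      have "mu n s' < mu n s" using mu_less[OF s'(1) less.prems s'(2,3)] .
      then have "span_subcode n E s' \<subseteq> C.span (BB \<inter> span_subcode n E s')" using less.hyps s'(1) by blast
      also have "\<dots> \<subseteq> C.span (BB \<inter> span_subcode n E s)"
        using S_mono[OF s'(1) less.prems s'(2)] by (intro C.span_mono) blast
      finally show ?thesis .
    qed
    have "\<Union>{span_subcode n E s' | s'. valid_span n s' \<and> span_le n s' s \<and> s' \<noteq> s} \<subseteq>
        C.span (BB \<inter> span_subcode n E s)" using U by blast
    then have "below_subcode scale n E s \<subseteq> C.span (BB \<inter> span_subcode n E s)"
      unfolding below_subcode_def by (intro C.span_minimal) auto
    then have "x - y \<in> C.span (BB \<inter> span_subcode n E s)" using y by blast
    moreover have "y \<in> C.span (BB \<inter> span_subcode n E s)" using y(1) C.span_mono[OF sub] by blast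
    ultimately have "(x - y) + y \<in> C.span (BB \<inter> span_subcode n E s)" by (rule C.span_add)
    then show "x \<in> C.span (BB \<inter> span_subcode n E s)" by simp
  qed
qed

lemma span_S_eq: "valid_span n s \<Longrightarrow> C.span (BB \<inter> span_subcode n E s) = span_subcode n E s"
  using span_S C.span_minimal[OF _ S_sub, of "BB \<inter> span_subcode n E s" s] by blast

lemma BB_cyc: "BB \<subseteq> cycles n E"
  using Bs_S by (auto simp: BB_def span_subcode_def)

lemma span_BB: "C.span BB = cycles n E"
proof
  show "C.span BB \<subseteq> cycles n E" using C.span_minimal[OF BB_cyc cycles_sub] .
  have "cycles n E = span_subcode n E SFull" by (auto simp: span_subcode_def has_span_def)
  also have "\<dots> \<subseteq> C.span (BB \<inter> span_subcode n E SFull)" using span_S by (simp add: valid_span_def)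
  also have "\<dots> \<subseteq> C.span BB" by (intro C.span_mono) blast
  finally show "cycles n E \<subseteq> C.span BB" .
qed

lemma indep_BB: "C.independent BB"
proof
  assume "C.dependent BB"
  then obtain t u v0 where t: "finite t" "t \<subseteq> BB" "(\<Sum>v\<in>t. cscale scale (u v) v) = 0"
    "v0 \<in> t" "u v0 \<noteq> 0"
    unfolding C.dependent_explicit by blast
  define \<sigma> where "\<sigma> b = (SOME s. valid_span n s \<and> b \<in> Bs s)" for b
  have \<sigma>: "valid_span n (\<sigma> b) \<and> b \<in> Bs (\<sigma> b)" if "b \<in> BB" for b
    unfolding \<sigma>_def by (rule someI_ex) (use that BB_def in blast)
  have \<sigma>u: "\<sigma> b = s" if "b \<in> BB" "valid_span n s" "b \<in> Bs s" for b s
    using disj[of "\<sigma> b" s] \<sigma>[OF that(1)] that by blast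
  define T where "T = {v\<in>t. u v \<noteq> 0}"
  have T: "finite T" "T \<subseteq> BB" "v0 \<in> T" using t by (auto simp: T_def)
  have sumT: "(\<Sum>v\<in>T. cscale scale (u v) v) = 0"
  proof -
    have "(\<Sum>v\<in>T. cscale scale (u v) v) = (\<Sum>v\<in>t. cscale scale (u v) v)"
      by (rule sum.mono_neutral_left) (use t in \<open>auto simp: T_def\<close>)
    then show ?thesis using t by simp
  qed
  obtain s where s: "s \<in> \<sigma> ` T" "\<And>s'. s' \<in> \<sigma> ` T \<Longrightarrow> mu n s' \<le> mu n s"
  proof -
    let ?M = "mu n ` \<sigma> ` T"
    have fin: "finite ?M" "?M \<noteq> {}" using T by auto
    have "Max ?M \<in> ?M" by (rule Max_in[OF fin])
    then obtain s0 where s0: "s0 \<in> \<sigma> ` T" "mu n s0 = Max ?M" by (metis imageE)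
    have "mu n s' \<le> mu n s0" if "s' \<in> \<sigma> ` T" for s'
      unfolding s0(2) by (rule Max_ge[OF fin(1)]) (use that in simp)
    then show ?thesis using that s0(1) by blast
  qed
  have vs: "valid_span n s" using s(1) \<sigma> T(2) by blast
  define A where "A = {v\<in>T. \<sigma> v = s}"
  have A2: "A \<subseteq> Bs s"
  proof
    fix v assume "v \<in> A"
    then have "v \<in> BB" "\<sigma> v = s" using T by (auto simp: A_def)
    then show "v \<in> Bs s" using \<sigma> by metis
  qed
  have A: "finite A" "A \<subseteq> Bs s" "A \<noteq> {}" using T s(1) A2 by (auto simp: A_def)
  have split: "(\<Sum>v\<in>T. cscale scale (u v) v) = (\<Sum>v\<in>A. cscale scale (u v) v) + (\<Sum>v\<in>T - A. cscale scale (u v) v)"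
  proof -
    have "A \<subseteq> T" by (auto simp: A_def)
    then show ?thesis using sum.subset_diff[OF _ T(1)] by (simp add: add.commute)
  qed
  have eq: "(\<Sum>v\<in>A. cscale scale (u v) v) = - (\<Sum>v\<in>T - A. cscale scale (u v) v)"
    using sumT split by (simp add: eq_neg_iff_add_eq_0)
  have inS: "(\<Sum>v\<in>A. cscale scale (u v) v) \<in> span_subcode n E s"
    using A(2) Bs_S[OF vs] by (intro C.subspace_sum[OF S_sub] C.subspace_scale[OF S_sub]) blast
  have "(\<Sum>v\<in>T - A. cscale scale (u v) v) \<in>
      C.span (\<Union>{span_subcode n E s' | s'. valid_span n s' \<and> \<not> span_le n s s'})"
  proof (intro C.span_sum C.span_scale C.span_base)
    fix v assume v: "v \<in> T - A"
    then have vB: "v \<in> BB" using T by blast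
    have ne: "\<sigma> v \<noteq> s" using v by (auto simp: A_def)
    have "\<not> span_le n s (\<sigma> v)"
    proof
      assume "span_le n s (\<sigma> v)"
      then have "mu n s < mu n (\<sigma> v)" using mu_less[OF vs] \<sigma>[OF vB] ne by metis
      moreover have "mu n (\<sigma> v) \<le> mu n s" using s(2) v by blast
      ultimately show False by simp
    qed
    then show "v \<in> \<Union>{span_subcode n E s' | s'. valid_span n s' \<and> \<not> span_le n s s'}"
      using \<sigma>[OF vB] Bs_S by blast
  qed
  then have "(\<Sum>v\<in>A. cscale scale (u v) v) \<in>
      C.span (\<Union>{span_subcode n E s' | s'. valid_span n s' \<and> \<not> span_le n s s'})"
    unfolding eq by (rule C.span_neg)
  then have "(\<Sum>v\<in>A. cscale scale (u v) v) \<in> below_subcode scale n E s"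
    using KL[OF vs inS] by simp
  then have "\<forall>v\<in>A. u v = 0" using qb[OF vs] A unfolding quotient_basis_def by blast
  moreover have "\<forall>v\<in>A. u v \<noteq> 0" by (auto simp: A_def T_def)
  ultimately show False using A(3) by blast
qed

end

end

theorem mainTheorem2:
  fixes scale :: "'f::{field,finite} \<Rightarrow> 'v::ab_group_add \<Rightarrow> 'v"
    and n :: nat
    and V :: "nat \<Rightarrow> 'v set"
    and E :: "nat \<Rightarrow> ('v \<times> 'f \<times> 'v) set"
    and Bs :: "spn \<Rightarrow> ('v, 'f) cyc set"
  assumes lin: "linear_trellis scale n V E"
    and red: "reduced n E"
    and choice: "\<forall>s. valid_span n s \<longrightarrow>
       quotient_basis (cscale scale) (below_subcode scale n E s) (span_subcode n E s) (Bs s)"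
  shows "(\<forall>s s'. valid_span n s \<and> valid_span n s' \<and> s \<noteq> s' \<longrightarrow> Bs s \<inter> Bs s' = {})
    \<and> is_basis (cscale scale) (\<Union>{Bs s | s. valid_span n s}) (cycles n E)
    \<and> (\<forall>s. valid_span n s \<longrightarrow>
          module.span (cscale scale) ((\<Union>{Bs s | s. valid_span n s}) \<inter> span_subcode n E s)
            = span_subcode n E s)
    \<and> (\<exists>B. product_basis scale n E B)"
proof -
  interpret LT scale n E
    using lin unfolding linear_trellis_def trellis_def LT_def LT_axioms_def
    by auto
  have d: "\<forall>s s'. valid_span n s \<and> valid_span n s' \<and> s \<noteq> s' \<longrightarrow> Bs s \<inter> Bs s' = {}"
    using disj[OF choice] by blast
  have b: "is_basis (cscale scale) (\<Union>{Bs s | s. valid_span n s}) (cycles n E)"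
    using indep_BB[OF choice] span_BB[OF choice] unfolding is_basis_def BB_eq[OF choice] by simp
  have sp: "\<forall>s. valid_span n s \<longrightarrow>
          module.span (cscale scale) ((\<Union>{Bs s | s. valid_span n s}) \<inter> span_subcode n E s)
            = span_subcode n E s"
    using span_S_eq[OF choice] unfolding BB_eq[OF choice] by simp
  have "product_basis scale n E (\<Union>{Bs s | s. valid_span n s})"
    using b sp unfolding product_basis_def by simp
  then show ?thesis using d b sp by blast
qed

end
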